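(* Let $A$ and $A'$ be pomset automata such that $A'$ weakly implements $A$. Then there exists a pomset automaton $A''$ implementing $A$. Furthermore, if $A'$ is $n$-forking (resp. flat-branching, parsimonious), then so is $A''$.
   Context: Fix a finite alphabet $\Sigma$. Pomsets are isomorphism classes of finite labelled posets over $\Sigma$; $1$ is the empty pomset; $\mathsf{SP}(\Sigma)$ is the smallest set containing $1$ and the one-element pomsets closed under sequential composition $\cdot$ and parallel composition $\parallel$. A pomset automaton (PA) is $A=\langle Q,F,\delta,\gamma\rangle$ with $F\subseteq Q$, $\delta:Q\times\Sigma\to2^Q$, $\gamma:Q\times\mathbb{M}(Q)\to2^Q$ ($\mathbb{M}(Q)$ finite multisets over $Q$, $|\phi|$ its size), each $q$ having finitely many $\phi$ with $\gamma(q,\phi)\ne\emptyset$; it is finite if $Q$ is finite. The run relation $\to_A$ is the smallest relation with: $q\xrightarrow{1}_A q$; $q\xrightarrow{a}_A q'$ if $q'\in\delta(q,a)$; $q\xrightarrow{U\cdot V}_A q'$ if $q\xrightarrow{U}_A q''\xrightarrow{V}_A q'$; $q\xrightarrow{U_1\parallel\cdots\parallel U_n}_A q'$ if $q'\in\gamma(q,\{\!|q_1,\dots,q_n|\!\})$ and each $q_i\xrightarrow{U_i}_A q_i'$ for some $q_i'\in F$. $L_A(q)=\{U\mid\exists q'\in F.\ q\xrightarrow{U}_A q'\}$. The support relation $\preceq_A$ is the smallest preorder on $Q$ with $q'\preceq_A q$ whenever $q'\in\delta(q,a)$, or $q'\in\gamma(q,\phi)$, or $q'\in\phi$ with $\gamma(q,\phi)\ne\emptyset$;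 $A$ is fork-acyclic if $r\in\phi$ and $\gamma(q,\phi)\ne\emptyset$ imply $q\not\preceq_A r$. $A'=\langle Q',F',\delta',\gamma'\rangle$ implements $A=\langle Q,F,\delta,\gamma\rangle$ if $Q\subseteq Q'$, $L_A(q)=L_{A'}(q)$ for every $q\in Q$, and if $A$ is fork-acyclic (resp. finite) then so is $A'$. $A'$ weakly implements $A$ if for every state $q$ of $A$ there is a finite set $Q_q$ of states of $A'$ with $L_A(q)=\bigcup_{x\in Q_q}L_{A'}(x)$, and if $A$ is fork-acyclic (resp. finite) then so is $A'$. $A$ is $n$-forking if $\gamma(q,\phi)\ne\emptyset$ implies $|\phi|\ge n$; parsimonious if $q\in\phi$ and $\gamma(p,\phi)\ne\emptyset$ imply $1\notin L_A(q)$; flat-branching if $\gamma(q,\phi)\ne\emptyset$ and $p\in\phi$ imply $\gamma(p,\psi)\cap F=\emptyset$ for all $\psi$. *)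

theory Defs
  imports Main "HOL-Library.Multiset"
begin

record 'a lposet =
  carrier :: "nat set"
  ord :: "(nat \<times> nat) set"
  lab :: "nat \<Rightarrow> 'a"

definition wf_lp :: "'a lposet \<Rightarrow> bool" where
  "wf_lp U \<longleftrightarrow> finite (carrier U) \<and> ord U \<subseteq> carrier U \<times> carrier U
     \<and> refl_on (carrier U) (ord U) \<and> antisym (ord U) \<and> trans (ord U)"

definition lp_iso :: "'a lposet \<Rightarrow> 'a lposet \<Rightarrow> bool" where
  "lp_iso U V \<longleftrightarrow> (\<exists>f. bij_betw f (carrier U) (carrier V)
     \<and> (\<forall>x\<in>carrier U. \<forall>y\<in>carrier U. (x, y) \<in> ord U \<longleftrightarrow> (f x, f y) \<in> ord V)
     \<and> (\<forall>x\<in>carrier U. lab V (f x) = lab U x))"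

text \<open>A pomset is an isomorphism class of finite labelled posets.\<close>
type_synonym 'a pomset = "'a lposet set"

definition pc :: "'a lposet \<Rightarrow> 'a pomset" where
  "pc U = {V. wf_lp V \<and> lp_iso U V}"

definition pomsets :: "'a pomset set" where
  "pomsets = {pc U | U. wf_lp U}"

definition seq_lp :: "'a lposet \<Rightarrow> 'a lposet \<Rightarrow> 'a lposet" where
  "seq_lp U V = \<lparr> carrier = (\<lambda>x. 2*x) ` carrier U \<union> (\<lambda>x. 2*x+1) ` carrier V,
     ord = (\<lambda>(x,y). (2*x, 2*y)) ` ord U \<union> (\<lambda>(x,y). (2*x+1, 2*y+1)) ` ord V
           \<union> {(2*x, 2*y+1) | x y. x \<in> carrier U \<and> y \<in> carrier V},
     lab = (\<lambda>n. if even n then lab U (n div 2) else lab V (n div 2)) \<rparr>"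

definition par_lp :: "'a lposet \<Rightarrow> 'a lposet \<Rightarrow> 'a lposet" where
  "par_lp U V = \<lparr> carrier = (\<lambda>x. 2*x) ` carrier U \<union> (\<lambda>x. 2*x+1) ` carrier V,
     ord = (\<lambda>(x,y). (2*x, 2*y)) ` ord U \<union> (\<lambda>(x,y). (2*x+1, 2*y+1)) ` ord V,
     lab = (\<lambda>n. if even n then lab U (n div 2) else lab V (n div 2)) \<rparr>"

definition rep :: "'a pomset \<Rightarrow> 'a lposet" where
  "rep X = (SOME U. U \<in> X)"

definition pseq :: "'a pomset \<Rightarrow> 'a pomset \<Rightarrow> 'a pomset" where
  "pseq X Y = pc (seq_lp (rep X) (rep Y))"

definition ppar :: "'a pomset \<Rightarrow> 'a pomset \<Rightarrow> 'a pomset" where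
  "ppar X Y = pc (par_lp (rep X) (rep Y))"

definition pone :: "'a pomset" where
  "pone = pc \<lparr> carrier = {}, ord = {}, lab = (\<lambda>_. undefined) \<rparr>"

definition patom :: "'a \<Rightarrow> 'a pomset" where
  "patom a = pc \<lparr> carrier = {0}, ord = {(0,0)}, lab = (\<lambda>_. a) \<rparr>"

fun ppar_list :: "'a pomset list \<Rightarrow> 'a pomset" where
  "ppar_list [] = pone"
| "ppar_list [U] = U"
| "ppar_list (U # Us) = ppar U (ppar_list Us)"

record ('q, 'a) pa =
  states :: "'q set"
  fin :: "'q set"
  delta :: "'q \<Rightarrow> 'a \<Rightarrow> 'q set"
  gamma :: "'q \<Rightarrow> 'q multiset \<Rightarrow> 'q set"

definition is_pa :: "('q, 'a) pa \<Rightarrow> bool" where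
  "is_pa A \<longleftrightarrow> fin A \<subseteq> states A
    \<and> (\<forall>q a. delta A q a \<subseteq> states A \<and> (q \<notin> states A \<longrightarrow> delta A q a = {}))
    \<and> (\<forall>q \<phi>. gamma A q \<phi> \<subseteq> states A)
    \<and> (\<forall>q \<phi>. gamma A q \<phi> \<noteq> {} \<longrightarrow> q \<in> states A \<and> set_mset \<phi> \<subseteq> states A)
    \<and> (\<forall>q \<in> states A. finite {\<phi>. gamma A q \<phi> \<noteq> {}})"

definition finite_pa :: "('q, 'a) pa \<Rightarrow> bool" where
  "finite_pa A \<longleftrightarrow> finite (states A)"

inductive run :: "('q, 'a) pa \<Rightarrow> 'q \<Rightarrow> 'a pomset \<Rightarrow> 'q \<Rightarrow> bool" for A where
  run_one: "run A q pone q"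
| run_atom: "q' \<in> delta A q a \<Longrightarrow> run A q (patom a) q'"
| run_seq: "run A q U q'' \<Longrightarrow> run A q'' V q' \<Longrightarrow> run A q (pseq U V) q'"
| run_par: "q' \<in> gamma A q (mset qs) \<Longrightarrow> length Us = length qs \<Longrightarrow>
    (\<forall>i < length qs. \<exists>qf \<in> fin A. run A (qs ! i) (Us ! i) qf) \<Longrightarrow>
    run A q (ppar_list Us) q'"

definition lang :: "('q, 'a) pa \<Rightarrow> 'q \<Rightarrow> 'a pomset set" where
  "lang A q = {U. \<exists>q' \<in> fin A. run A q U q'}"

definition support_step :: "('q, 'a) pa \<Rightarrow> ('q \<times> 'q) set" where
  "support_step A = {(q', q). (\<exists>a. q' \<in> delta A q a)
      \<or> (\<exists>\<phi>. q' \<in> gamma A q \<phi>)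
      \<or> (\<exists>\<phi>. q' \<in># \<phi> \<and> gamma A q \<phi> \<noteq> {})}"

definition supp :: "('q, 'a) pa \<Rightarrow> 'q \<Rightarrow> 'q \<Rightarrow> bool" where
  "supp A q' q \<longleftrightarrow> (q', q) \<in> (support_step A)\<^sup>*"

definition fork_acyclic :: "('q, 'a) pa \<Rightarrow> bool" where
  "fork_acyclic A \<longleftrightarrow> (\<forall>q \<phi> r. r \<in># \<phi> \<and> gamma A q \<phi> \<noteq> {} \<longrightarrow> \<not> supp A q r)"

definition implements :: "('q \<Rightarrow> 'r) \<Rightarrow> ('q, 'a) pa \<Rightarrow> ('r, 'a) pa \<Rightarrow> bool" where
  "implements \<iota> A A' \<longleftrightarrow> inj_on \<iota> (states A) \<and> \<iota> ` states A \<subseteq> states A'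
    \<and> (\<forall>q \<in> states A. lang A q = lang A' (\<iota> q))
    \<and> (fork_acyclic A \<longrightarrow> fork_acyclic A')
    \<and> (finite_pa A \<longrightarrow> finite_pa A')"

definition weakly_implements :: "('q, 'a) pa \<Rightarrow> ('r, 'a) pa \<Rightarrow> bool" where
  "weakly_implements A A' \<longleftrightarrow>
    (\<forall>q \<in> states A. \<exists>Qq. finite Qq \<and> Qq \<subseteq> states A' \<and> lang A q = (\<Union>x \<in> Qq. lang A' x))
    \<and> (fork_acyclic A \<longrightarrow> fork_acyclic A')
    \<and> (finite_pa A \<longrightarrow> finite_pa A')"

definition n_forking :: "nat \<Rightarrow> ('q, 'a) pa \<Rightarrow> bool" where
  "n_forking n A \<longleftrightarrow> (\<forall>q \<phi>. gamma A q \<phi> \<noteq> {} \<longrightarrow> size \<phi> \<ge> n)"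

definition parsimonious :: "('q, 'a) pa \<Rightarrow> bool" where
  "parsimonious A \<longleftrightarrow> (\<forall>p q \<phi>. q \<in># \<phi> \<and> gamma A p \<phi> \<noteq> {} \<longrightarrow> pone \<notin> lang A q)"

definition flat_branching :: "('q, 'a) pa \<Rightarrow> bool" where
  "flat_branching A \<longleftrightarrow> (\<forall>q \<phi> p \<psi>. gamma A q \<phi> \<noteq> {} \<and> p \<in># \<phi> \<longrightarrow> gamma A p \<psi> \<inter> fin A = {})"

end

theory Submission
  imports Defs
begin

definition mk :: "('q,'a) pa \<Rightarrow> ('r,'a) pa \<Rightarrow> ('q \<Rightarrow> 'r set) \<Rightarrow> ('q+'r,'a) pa" where
"mk A A' Q = \<lparr> states = Inl ` states A \<union> Inr ` states A',
  fin = Inl ` {q \<in> states A. \<exists>x\<in>Q q. x \<in> fin A'} \<union> Inr ` fin A',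
  delta = (\<lambda>s a. case s of Inl q \<Rightarrow> if q \<in> states A then Inr ` (\<Union>x\<in>Q q. delta A' x a) else {}
                      | Inr x \<Rightarrow> Inr ` delta A' x a),
  gamma = (\<lambda>s \<phi>. if set_mset \<phi> \<subseteq> range Inr then
       (case s of Inl q \<Rightarrow> if q \<in> states A then Inr ` (\<Union>x\<in>Q q. gamma A' x (image_mset projr \<phi>)) else {}
          | Inr x \<Rightarrow> Inr ` gamma A' x (image_mset projr \<phi>)) else {}) \<rparr>"

lemma mset_map_Inr[simp]: "image_mset projr (image_mset Inr M) = M"
  by (simp add: multiset.map_comp comp_def)

lemma Inr_range[simp]: "Inr ` S \<subseteq> range Inr" by auto

lemma L1: "run A' x U y \<Longrightarrow> run (mk A A' Q) (Inr x) U (Inr y)"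
proof (induction rule: run.induct)
  case (run_one q)
  then show ?case by (rule run.run_one)
next
  case (run_atom q' q a)
  then show ?case by (intro run.run_atom) (auto simp: mk_def)
next
  case (run_seq q U q'' V q')
  then show ?case using run.run_seq by metis
next
  case (run_par q' q qs Us)
  have g: "Inr q' \<in> gamma (mk A A' Q) (Inr q) (mset (map Inr qs))"
    using run_par(1) by (auto simp: mk_def mset_map_Inr)
  show ?case
  proof (rule run.run_par[OF g])
    show "length Us = length (map Inr qs)" using run_par(2) by simp
    show "\<forall>i<length (map Inr qs). \<exists>qf\<in>fin (mk A A' Q). run (mk A A' Q) (map Inr qs ! i) (Us ! i) qf"
    proof (intro allI impI)
      fix i assume "i < length (map Inr qs)"
      then obtain qf where "qf \<in> fin A'" "run (mk A A' Q) (Inr (qs!i)) (Us ! i) (Inr qf)"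
        using run_par(3) by auto
      then show "\<exists>qf\<in>fin (mk A A' Q). run (mk A A' Q) (map Inr qs ! i) (Us ! i) qf"
        using \<open>i < _\<close> by (intro bexI[of _ "Inr qf"]) (auto simp: mk_def)
    qed
  qed
qed

lemma proj_list:
  assumes "set qs \<subseteq> range Inr"
  shows "qs = map Inr (map projr qs)"
  using assms by (induction qs) auto

lemma L2: "run (mk A A' Q) s U t \<Longrightarrow>
  (\<forall>x. s = Inr x \<longrightarrow> (\<exists>y. t = Inr y \<and> run A' x U y)) \<and>
  (\<forall>q. s = Inl q \<longrightarrow> (t = Inl q \<and> (\<forall>x. run A' x U x)) \<or> (\<exists>x\<in>Q q. \<exists>y. t = Inr y \<and> run A' x U y))"
proof (induction rule: run.induct)
  case (run_one q)
  then show ?case by (auto intro: run.run_one)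
next
  case (run_atom q' q a)
  then show ?case by (auto simp: mk_def split: sum.splits if_splits intro: run.run_atom)
next
  case (run_seq q U q'' V q')
  show ?case
  proof (intro conjI allI impI)
    fix x assume "q = Inr x"
    then show "\<exists>y. q' = Inr y \<and> run A' x (pseq U V) y"
      using run_seq.IH by (metis run.run_seq)
  next
    fix p assume p: "q = Inl p"
    from run_seq.IH(1) p have
      "(q'' = Inl p \<and> (\<forall>x. run A' x U x)) \<or> (\<exists>x\<in>Q p. \<exists>y. q'' = Inr y \<and> run A' x U y)" by blast
    then show "(q' = Inl p \<and> (\<forall>x. run A' x (pseq U V) x)) \<or> (\<exists>x\<in>Q p. \<exists>y. q' = Inr y \<and> run A' x (pseq U V) y)"
    proof
      assume h: "q'' = Inl p \<and> (\<forall>x. run A' x U x)"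
      then have "(q' = Inl p \<and> (\<forall>x. run A' x V x)) \<or> (\<exists>x\<in>Q p. \<exists>y. q' = Inr y \<and> run A' x V y)"
        using run_seq.IH(2) by blast
      then show ?thesis using h by (metis run.run_seq)
    next
      assume "\<exists>x\<in>Q p. \<exists>y. q'' = Inr y \<and> run A' x U y"
      then show ?thesis using run_seq.IH(2) by (metis run.run_seq)
    qed
  qed
next
  case (run_par q' q qs Us)
  have sub: "set qs \<subseteq> range Inr" using run_par(1) by (auto simp: mk_def split: if_splits)
  then have qs: "qs = map Inr (map projr qs)" by (rule proj_list)
  define ps where "ps = map projr qs"
  have qsps: "qs = map Inr ps" using qs ps_def by simp
  have subs: "\<forall>i<length ps. \<exists>qf\<in>fin A'. run A' (ps ! i) (Us ! i) qf"
  proof (intro allI impI)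
    fix i assume i: "i < length ps"
    then obtain qf where qf: "qf \<in> fin (mk A A' Q)"
      "\<forall>x. qs ! i = Inr x \<longrightarrow> (\<exists>y. qf = Inr y \<and> run A' x (Us ! i) y)"
      using run_par(3) qsps by auto
    then obtain y where "qf = Inr y" "run A' (ps!i) (Us ! i) y" using i qsps by auto
    with qf(1) show "\<exists>qf\<in>fin A'. run A' (ps ! i) (Us ! i) qf" by (auto simp: mk_def)
  qed
  have len: "length Us = length ps" using run_par(2) qsps by simp
  have g: "q' \<in> gamma (mk A A' Q) q (mset (map Inr ps))" using run_par(1) qsps by simp
  show ?case
  proof (intro conjI allI impI)
    fix x assume qx: "q = Inr x"
    have "q' \<in> Inr ` gamma A' x (mset ps)" using g unfolding qx by (simp add: mk_def)
    then obtain y where "q' = Inr y" "y \<in> gamma A' x (mset ps)" by blast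
    then show "\<exists>y. q' = Inr y \<and> run A' x (ppar_list Us) y"
      using run.run_par[OF _ len subs] by blast
  next
    fix p assume "q = Inl p"
    with g obtain x y where "x \<in> Q p" "q' = Inr y" "y \<in> gamma A' x (mset ps)"
      by (auto simp: mk_def mset_map_Inr split: if_splits)
    then show "(q' = Inl p \<and> (\<forall>x. run A' x (ppar_list Us) x)) \<or> (\<exists>x\<in>Q p. \<exists>y. q' = Inr y \<and> run A' x (ppar_list Us) y)"
      using run.run_par[OF _ len subs] by blast
  qed
qed

lemma L3: "run A' x U y \<Longrightarrow> x \<in> Q q \<Longrightarrow> q \<in> states A \<Longrightarrow>
   run (mk A A' Q) (Inl q) U (Inr y) \<or> (y = x \<and> run (mk A A' Q) (Inl q) U (Inl q))"
proof (induction rule: run.induct)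
  case (run_one q)
  then show ?case by (auto intro: run.run_one)
next
  case (run_atom q' x a)
  then show ?case by (intro disjI1 run.run_atom) (auto simp: mk_def)
next
  case (run_seq x U q'' V q')
  from run_seq.IH(1)[OF run_seq.prems] show ?case
  proof
    assume "run (mk A A' Q) (Inl q) U (Inr q'')"
    then show ?thesis using L1[OF run_seq.hyps(2)] by (metis run.run_seq)
  next
    assume h: "q'' = x \<and> run (mk A A' Q) (Inl q) U (Inl q)"
    then have "run (mk A A' Q) (Inl q) V (Inr q') \<or> (q' = q'' \<and> run (mk A A' Q) (Inl q) V (Inl q))"
      using run_seq.IH(2) run_seq.prems by blast
    then show ?thesis using h by (metis run.run_seq)
  qed
next
  case (run_par q' x qs Us)
  have g: "Inr q' \<in> gamma (mk A A' Q) (Inl q) (mset (map Inr qs))"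
    using run_par by (auto simp: mk_def mset_map_Inr)
  show ?case
  proof (rule disjI1, rule run.run_par[OF g])
    show "length Us = length (map Inr qs)" using run_par(2) by simp
    show "\<forall>i<length (map Inr qs). \<exists>qf\<in>fin (mk A A' Q). run (mk A A' Q) (map Inr qs ! i) (Us ! i) qf"
    proof (intro allI impI)
      fix i assume "i < length (map Inr qs)"
      then obtain qf where "qf \<in> fin A'" "run A' (qs!i) (Us ! i) qf"
        using run_par(3) by auto
      then show "\<exists>qf\<in>fin (mk A A' Q). run (mk A A' Q) (map Inr qs ! i) (Us ! i) qf"
        using \<open>i < _\<close> L1 by (intro bexI[of _ "Inr qf"]) (auto simp: mk_def)
    qed
  qed
qed

lemma lang_Inr: "lang (mk A A' Q) (Inr x) = lang A' x"
proof
  show "lang (mk A A' Q) (Inr x) \<subseteq> lang A' x"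
    using L2 by (fastforce simp: lang_def mk_def)
  show "lang A' x \<subseteq> lang (mk A A' Q) (Inr x)"
    using L1 by (fastforce simp: lang_def mk_def)
qed

lemma lang_Inl:
  assumes "q \<in> states A"
  shows "lang (mk A A' Q) (Inl q) = (\<Union>x\<in>Q q. lang A' x)"
proof
  show "lang (mk A A' Q) (Inl q) \<subseteq> (\<Union>x\<in>Q q. lang A' x)"
  proof
    fix U assume "U \<in> lang (mk A A' Q) (Inl q)"
    then obtain t where t: "t \<in> fin (mk A A' Q)" "run (mk A A' Q) (Inl q) U t"
      by (auto simp: lang_def)
    from L2[OF t(2)] have
      "(t = Inl q \<and> (\<forall>x. run A' x U x)) \<or> (\<exists>x\<in>Q q. \<exists>y. t = Inr y \<and> run A' x U y)" by blast
    then show "U \<in> (\<Union>x\<in>Q q. lang A' x)"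
      using t(1) by (auto simp: lang_def mk_def)
  qed
  show "(\<Union>x\<in>Q q. lang A' x) \<subseteq> lang (mk A A' Q) (Inl q)"
  proof
    fix U assume "U \<in> (\<Union>x\<in>Q q. lang A' x)"
    then obtain x y where xy: "x \<in> Q q" "y \<in> fin A'" "run A' x U y" by (auto simp: lang_def)
    from L3[of A' x U y Q q A, OF xy(3) xy(1) assms] show "U \<in> lang (mk A A' Q) (Inl q)"
      using xy assms by (auto simp: lang_def mk_def)
  qed
qed

lemma step_Inr:
  assumes "(y, Inr z) \<in> support_step (mk A A' Q)"
  shows "\<exists>y'. y = Inr y' \<and> (y', z) \<in> support_step A'"
proof -
  from assms consider (d) a where "y \<in> delta (mk A A' Q) (Inr z) a"
    | (g) \<phi> where "y \<in> gamma (mk A A' Q) (Inr z) \<phi>"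
    | (f) \<phi> where "y \<in># \<phi>" "gamma (mk A A' Q) (Inr z) \<phi> \<noteq> {}"
    unfolding support_step_def by blast
  then show ?thesis
  proof cases
    case d
    then obtain y' where "y = Inr y'" "y' \<in> delta A' z a" by (auto simp: mk_def)
    then show ?thesis unfolding support_step_def by blast
  next
    case g
    then have c: "set_mset \<phi> \<subseteq> range Inr" by (auto simp: mk_def split: if_splits)
    with g obtain y' where "y = Inr y'" "y' \<in> gamma A' z (image_mset projr \<phi>)" by (auto simp: mk_def)
    then show ?thesis unfolding support_step_def by blast
  next
    case f
    then have c: "set_mset \<phi> \<subseteq> range Inr" by (auto simp: mk_def split: if_splits)
    with f obtain y' where y': "y = Inr y'" by auto
    with f have "y' \<in># image_mset projr \<phi>" by force
    moreover have "gamma A' z (image_mset projr \<phi>) \<noteq> {}" using f c by (auto simp: mk_def)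
    ultimately show ?thesis using y' unfolding support_step_def by blast
  qed
qed

lemma supp_Inr:
  assumes "(a, b) \<in> (support_step (mk A A' Q))\<^sup>*" "b = Inr b'"
  shows "\<exists>a'. a = Inr a' \<and> (a', b') \<in> (support_step A')\<^sup>*"
  using assms(1)
proof (induction rule: converse_rtrancl_induct)
  case base
  then show ?case using assms(2) by blast
next
  case (step y z)
  then obtain z' where "z = Inr z'" "(z', b') \<in> (support_step A')\<^sup>*" by blast
  with step_Inr[of y z' A A' Q] step(1) show ?case
    by (meson converse_rtrancl_into_rtrancl)
qed

lemma gamma_ne:
  assumes "gamma (mk A A' Q) s \<phi> \<noteq> {}"
  shows "set_mset \<phi> \<subseteq> range Inr \<and> \<phi> = image_mset Inr (image_mset projr \<phi>) \<and>
    (\<exists>x. gamma A' x (image_mset projr \<phi>) \<noteq> {} \<and>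
       (s = Inr x \<or> (\<exists>q. s = Inl q \<and> q \<in> states A \<and> x \<in> Q q)))"
proof -
  have c: "set_mset \<phi> \<subseteq> range Inr" using assms by (auto simp: mk_def split: if_splits)
  then have "\<phi> = image_mset Inr (image_mset projr \<phi>)"
    by (simp add: multiset.map_comp comp_def subset_iff image_iff, 
        metis (mono_tags, lifting) multiset.map_cong0 multiset.map_ident_strong sum.collapse(2) sum.disc(2) rangeE)
  moreover have "\<exists>x. gamma A' x (image_mset projr \<phi>) \<noteq> {} \<and>
       (s = Inr x \<or> (\<exists>q. s = Inl q \<and> q \<in> states A \<and> x \<in> Q q))"
    using assms c by (cases s) (auto simp: mk_def split: if_splits)
  ultimately show ?thesis using c by blast
qed

lemma mk_is_pa:
  assumes "is_pa A'" "\<forall>q\<in>states A. finite (Q q) \<and> Q q \<subseteq> states A'"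
  shows "is_pa (mk A A' Q)"
  unfolding is_pa_def
proof (intro conjI allI ballI impI)
  show "fin (mk A A' Q) \<subseteq> states (mk A A' Q)"
    using assms(1) unfolding is_pa_def mk_def by auto
  fix s a show "delta (mk A A' Q) s a \<subseteq> states (mk A A' Q)"
    using assms(1) unfolding is_pa_def mk_def by (auto split: sum.splits) blast+
next
  fix s a assume "s \<notin> states (mk A A' Q)" then show "delta (mk A A' Q) s a = {}"
    using assms(1) unfolding is_pa_def mk_def by (auto simp: image_iff split: sum.splits)
next
  fix s \<phi> show "gamma (mk A A' Q) s \<phi> \<subseteq> states (mk A A' Q)"
    using assms(1) unfolding is_pa_def mk_def by (auto split: sum.splits) blast+
next
  fix s \<phi> assume ne: "gamma (mk A A' Q) s \<phi> \<noteq> {}"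
  from gamma_ne[OF ne] obtain x where x: "gamma A' x (image_mset projr \<phi>) \<noteq> {}"
       "s = Inr x \<or> (\<exists>q. s = Inl q \<and> q \<in> states A \<and> x \<in> Q q)"
    and phi: "\<phi> = image_mset Inr (image_mset projr \<phi>)" by blast
  have xs: "x \<in> states A'" and ps: "set_mset (image_mset projr \<phi>) \<subseteq> states A'"
    using assms(1) x(1) unfolding is_pa_def by blast+
  show "s \<in> states (mk A A' Q)" using x(2) xs by (auto simp: mk_def)
  have "set_mset \<phi> = Inr ` set_mset (image_mset projr \<phi>)" using phi
    by (metis multiset.set_map)
  then show "set_mset \<phi> \<subseteq> states (mk A A' Q)" using ps by (auto simp: mk_def)
next
  fix s assume s: "s \<in> states (mk A A' Q)"
  define X where "X = (case s of Inl q \<Rightarrow> Q q | Inr x \<Rightarrow> {x})"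
  have fX: "finite X" "X \<subseteq> states A'" using s assms(2) by (auto simp: X_def mk_def) blast
  have "{\<phi>. gamma (mk A A' Q) s \<phi> \<noteq> {}} \<subseteq> image_mset Inr ` (\<Union>x\<in>X. {\<psi>. gamma A' x \<psi> \<noteq> {}})"
  proof
    fix \<phi> assume "\<phi> \<in> {\<phi>. gamma (mk A A' Q) s \<phi> \<noteq> {}}"
    from gamma_ne[of A A' Q s \<phi>] this obtain x where x: "gamma A' x (image_mset projr \<phi>) \<noteq> {}"
       "s = Inr x \<or> (\<exists>q. s = Inl q \<and> q \<in> states A \<and> x \<in> Q q)"
      and phi: "\<phi> = image_mset Inr (image_mset projr \<phi>)" by blast
    have "x \<in> X" using x(2) by (auto simp: X_def)
    then show "\<phi> \<in> image_mset Inr ` (\<Union>x\<in>X. {\<psi>. gamma A' x \<psi> \<noteq> {}})"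
      using x(1) phi by blast
  qed
  moreover have "finite (\<Union>x\<in>X. {\<psi>. gamma A' x \<psi> \<noteq> {}})"
    using fX assms(1) unfolding is_pa_def by blast
  ultimately show "finite {\<phi>. gamma (mk A A' Q) s \<phi> \<noteq> {}}"
    by (meson finite_imageI finite_subset)
qed

theorem lemma6p8:
  fixes A :: "('q, 'a::finite) pa" and A' :: "('r, 'a) pa"
  assumes "is_pa A" and "is_pa A'" and "weakly_implements A A'"
  shows "\<exists>(\<iota> :: 'q \<Rightarrow> 'q + 'r) (A'' :: ('q + 'r, 'a) pa). is_pa A'' \<and> implements \<iota> A A''
           \<and> (\<forall>n. n_forking n A' \<longrightarrow> n_forking n A'')
           \<and> (flat_branching A' \<longrightarrow> flat_branching A'')
           \<and> (parsimonious A' \<longrightarrow> parsimonious A'')"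
proof -
  have w: "\<forall>q \<in> states A. \<exists>Qq. finite Qq \<and> Qq \<subseteq> states A' \<and> lang A q = (\<Union>x \<in> Qq. lang A' x)"
    and fa: "fork_acyclic A \<longrightarrow> fork_acyclic A'" and fi: "finite_pa A \<longrightarrow> finite_pa A'"
    using assms(3) unfolding weakly_implements_def by blast+
  from bchoice[OF w] obtain Q where Q: "\<forall>q\<in>states A. finite (Q q) \<and> Q q \<subseteq> states A' \<and> lang A q = (\<Union>x \<in> Q q. lang A' x)"
    by blast
  define B where "B = mk A A' Q"
  have isB: "is_pa B" unfolding B_def using mk_is_pa[of A' A Q] assms(2) Q by blast
  have impl: "implements Inl A B"
    unfolding implements_def
  proof (intro conjI impI)
    show "inj_on Inl (states A)" by simp
    show "Inl ` states A \<subseteq> states B" by (auto simp: B_def mk_def)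
    show "\<forall>q\<in>states A. lang A q = lang B (Inl q)"
      using Q lang_Inl unfolding B_def by metis
  next
    assume "fork_acyclic A"
    with fa have fa': "fork_acyclic A'" by blast
    show "fork_acyclic B"
      unfolding fork_acyclic_def
    proof (intro allI impI notI)
      fix s \<phi> r assume h: "r \<in># \<phi> \<and> gamma B s \<phi> \<noteq> {}" and sp: "supp B s r"
      from gamma_ne[of A A' Q s \<phi>] h obtain x where x: "gamma A' x (image_mset projr \<phi>) \<noteq> {}"
         "s = Inr x \<or> (\<exists>q. s = Inl q \<and> q \<in> states A \<and> x \<in> Q q)"
        and phi: "set_mset \<phi> \<subseteq> range Inr" unfolding B_def by blast
      obtain r' where r': "r = Inr r'" using phi h by auto
      from supp_Inr[of s r A A' Q r'] sp r' obtain s' where s': "s = Inr s'" "(s', r') \<in> (support_step A')\<^sup>*"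
        unfolding supp_def B_def by blast
      with x have "s' = x" by auto
      moreover have "r' \<in># image_mset projr \<phi>" using h r' by force
      ultimately show False using fa' x(1) s' unfolding fork_acyclic_def supp_def by blast
    qed
  next
    assume "finite_pa A"
    with fi have "finite (states A')" unfolding finite_pa_def by blast
    then show "finite_pa B" using \<open>finite_pa A\<close> unfolding finite_pa_def B_def mk_def by simp
  qed
  have nf: "\<forall>n. n_forking n A' \<longrightarrow> n_forking n B"
  proof (intro allI impI)
    fix n assume nA: "n_forking n A'"
    show "n_forking n B" unfolding n_forking_def
    proof (intro allI impI)
      fix s \<phi> assume "gamma B s \<phi> \<noteq> {}"
      from gamma_ne[of A A' Q s \<phi>] this obtain x where "gamma A' x (image_mset projr \<phi>) \<noteq> {}"
        unfolding B_def by blast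
      with nA show "n \<le> size \<phi>" unfolding n_forking_def by fastforce
    qed
  qed
  have fb: "flat_branching A' \<longrightarrow> flat_branching B"
  proof
    assume fA: "flat_branching A'"
    show "flat_branching B" unfolding flat_branching_def
    proof (intro allI impI)
      fix s \<phi> p \<psi> assume h: "gamma B s \<phi> \<noteq> {} \<and> p \<in># \<phi>"
      from gamma_ne[of A A' Q s \<phi>] h obtain x where x: "gamma A' x (image_mset projr \<phi>) \<noteq> {}"
        and phi: "set_mset \<phi> \<subseteq> range Inr" unfolding B_def by blast
      obtain p' where p': "p = Inr p'" using phi h by auto
      have "p' \<in># image_mset projr \<phi>" using h p' by force
      with fA x have e: "gamma A' p' \<psi>' \<inter> fin A' = {}" for \<psi>'
        unfolding flat_branching_def by blast
      show "gamma B p \<psi> \<inter> fin B = {}"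
        using e[of "image_mset projr \<psi>"] p' by (auto simp: B_def mk_def)
    qed
  qed
  have pa: "parsimonious A' \<longrightarrow> parsimonious B"
  proof
    assume pA: "parsimonious A'"
    show "parsimonious B" unfolding parsimonious_def
    proof (intro allI impI)
      fix p q \<phi> assume h: "q \<in># \<phi> \<and> gamma B p \<phi> \<noteq> {}"
      from gamma_ne[of A A' Q p \<phi>] h obtain x where x: "gamma A' x (image_mset projr \<phi>) \<noteq> {}"
        and phi: "set_mset \<phi> \<subseteq> range Inr" unfolding B_def by blast
      obtain q' where q': "q = Inr q'" using phi h by auto
      have "q' \<in># image_mset projr \<phi>" using h q' by force
      with pA x have "pone \<notin> lang A' q'" unfolding parsimonious_def by blast
      then show "pone \<notin> lang B q" using q' lang_Inr unfolding B_def by metis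
    qed
  qed
  show ?thesis using isB impl nf fb pa by blast
qed

end
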